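(* Let $G$ be a finite connected graph with at least one edge and $\Delta$ a decision tree for $G$. Then the set of subsets of $E(G)$ is the disjoint union of subgraph intervals indexed by the spanning trees: $$2^{E(G)}=\bigsqcup_{T\text{ spanning tree of }G}\bigl[T\setminus\mathcal J(T),\ T\cup\mathcal E(T)\bigr],$$ where $\mathcal J(T)$ and $\mathcal E(T)$ are the sets of $\Delta$-active edges of $T$ belonging to $T$ and not belonging to $T$ respectively.
   Context: Graphs may have loops and multiple edges; spanning subgraphs are identified with edge subsets, and for $A\subseteq B\subseteq E(G)$ the interval $[A,B]$ is $\{S:A\subseteq S\subseteq B\}$. An isthmus is an edge whose deletion increases the number of components; an edge is standard if neither a loop nor an isthmus. Let $m=|E(G)|$. A decision tree is a perfect binary tree of depth $m-1$ whose nodes are labelled by edges of $G$ so that along every root-to-leaf path the labels form a permutation of $E(G)$. Given $S\subseteq E(G)$, run: $H:=G$, $n:=$ root; for $k=1,\dots,m$: let $e$ be the label of $n$; if $e$ is a loop of $H$: type L, delete $e$, go to left child; if $e$ is an isthmus of $H$: type I, contract $e$, go to right child; if $e$ is standard and $e\notin S$: type $S_e$, delete, go left; if standard and $e\in S$: type $S_i$, contract, go right. An edge is $\Delta$-active for $S$ if its type is L or I. *)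

theory Defs
  imports Main
begin

text \<open>A finite multigraph (loops and multiple edges allowed) is given by a vertex set V,
an edge set E and an incidence map inc assigning to each edge its pair of endpoints.
Spanning subgraphs are identified with edge subsets.\<close>

definition adj :: "('e \<Rightarrow> 'v \<times> 'v) \<Rightarrow> 'e set \<Rightarrow> ('v \<times> 'v) set" where
  "adj inc Es = {(x, y). \<exists>e\<in>Es. inc e = (x, y) \<or> inc e = (y, x)}"

definition components :: "'v set \<Rightarrow> ('e \<Rightarrow> 'v \<times> 'v) \<Rightarrow> 'e set \<Rightarrow> 'v set set" where
  "components V inc Es = {(adj inc Es)\<^sup>* `` {x} \<inter> V | x. x \<in> V}"

definition is_graph :: "'v set \<Rightarrow> ('e \<Rightarrow> 'v \<times> 'v) \<Rightarrow> 'e set \<Rightarrow> bool" where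
  "is_graph V inc Es \<longleftrightarrow> finite V \<and> finite Es \<and> (\<forall>e\<in>Es. fst (inc e) \<in> V \<and> snd (inc e) \<in> V)"

definition connected_graph :: "'v set \<Rightarrow> ('e \<Rightarrow> 'v \<times> 'v) \<Rightarrow> 'e set \<Rightarrow> bool" where
  "connected_graph V inc Es \<longleftrightarrow> V \<noteq> {} \<and> (\<forall>x\<in>V. \<forall>y\<in>V. (x, y) \<in> (adj inc Es)\<^sup>*)"

definition is_loop :: "('e \<Rightarrow> 'v \<times> 'v) \<Rightarrow> 'e set \<Rightarrow> 'e \<Rightarrow> bool" where
  "is_loop inc Es e \<longleftrightarrow> e \<in> Es \<and> fst (inc e) = snd (inc e)"

definition is_isthmus :: "'v set \<Rightarrow> ('e \<Rightarrow> 'v \<times> 'v) \<Rightarrow> 'e set \<Rightarrow> 'e \<Rightarrow> bool" where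
  "is_isthmus V inc Es e \<longleftrightarrow> e \<in> Es \<and>
     card (components V inc (Es - {e})) > card (components V inc Es)"

text \<open>Acyclic: no edge (including loops) lies on a cycle, i.e. no edge has its endpoints
joined by a walk avoiding it.\<close>
definition acyclic_edges :: "('e \<Rightarrow> 'v \<times> 'v) \<Rightarrow> 'e set \<Rightarrow> bool" where
  "acyclic_edges inc T \<longleftrightarrow> (\<forall>e\<in>T. inc e \<notin> (adj inc (T - {e}))\<^sup>*)"

definition spanning_tree :: "'v set \<Rightarrow> ('e \<Rightarrow> 'v \<times> 'v) \<Rightarrow> 'e set \<Rightarrow> 'e set \<Rightarrow> bool" where
  "spanning_tree V inc E T \<longleftrightarrow> T \<subseteq> E \<and> connected_graph V inc T \<and> acyclic_edges inc T"

definition contract_inc :: "('e \<Rightarrow> 'v \<times> 'v) \<Rightarrow> 'e \<Rightarrow> ('e \<Rightarrow> 'v \<times> 'v)" where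
  "contract_inc inc e = (let (u, w) = inc e; \<sigma> = (\<lambda>x. if x = w then u else x)
                          in (\<lambda>f. (\<sigma> (fst (inc f)), \<sigma> (snd (inc f)))))"

definition contract_V :: "'v set \<Rightarrow> ('e \<Rightarrow> 'v \<times> 'v) \<Rightarrow> 'e \<Rightarrow> 'v set" where
  "contract_V V inc e = (let (u, w) = inc e in (\<lambda>x. if x = w then u else x) ` V)"

text \<open>A decision tree of depth m-1 is encoded by a labelling of nodes, nodes being addressed
by their path from the root (False = left child, True = right child).\<close>
definition decision_tree :: "'e set \<Rightarrow> (bool list \<Rightarrow> 'e) \<Rightarrow> bool" where
  "decision_tree E lab \<longleftrightarrow> (\<forall>p. length p = card E - 1 \<longrightarrow>
      distinct (map (\<lambda>k. lab (take k p)) [0..<card E]) \<and>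
      set (map (\<lambda>k. lab (take k p)) [0..<card E]) = E)"

datatype etype = TL | TI | TSe | TSi

fun run :: "nat \<Rightarrow> 'v set \<Rightarrow> ('e \<Rightarrow> 'v \<times> 'v) \<Rightarrow> 'e set \<Rightarrow> (bool list \<Rightarrow> 'e) \<Rightarrow> 'e set
             \<Rightarrow> bool list \<Rightarrow> ('e \<times> etype) list" where
  "run 0 V inc Es lab S p = []"
| "run (Suc n) V inc Es lab S p =
     (let e = lab p in
      if is_loop inc Es e then (e, TL) # run n V inc (Es - {e}) lab S (p @ [False])
      else if is_isthmus V inc Es e then
        (e, TI) # run n (contract_V V inc e) (contract_inc inc e) (Es - {e}) lab S (p @ [True])
      else if e \<notin> S then (e, TSe) # run n V inc (Es - {e}) lab S (p @ [False])
      else (e, TSi) # run n (contract_V V inc e) (contract_inc inc e) (Es - {e}) lab S (p @ [True]))"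

definition active :: "'v set \<Rightarrow> ('e \<Rightarrow> 'v \<times> 'v) \<Rightarrow> 'e set \<Rightarrow> (bool list \<Rightarrow> 'e) \<Rightarrow> 'e set \<Rightarrow> 'e set" where
  "active V inc E lab S = {e. (e, TL) \<in> set (run (card E) V inc E lab S []) \<or>
                              (e, TI) \<in> set (run (card E) V inc E lab S [])}"

definition internally_active where
  "internally_active V inc E lab T = active V inc E lab T \<inter> T"

definition externally_active where
  "externally_active V inc E lab T = active V inc E lab T - T"

definition interval :: "'a set \<Rightarrow> 'a set \<Rightarrow> 'a set set" where
  "interval A B = {S. A \<subseteq> S \<and> S \<subseteq> B}"

end

theory Submission
  imports Defs
begin


definition sig :: "'v \<Rightarrow> 'v \<Rightarrow> 'v \<Rightarrow> 'v" where
  "sig u w x = (if x = w then u else x)"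

lemma contract_inc_eq: "inc e = (u, w) \<Longrightarrow>
  contract_inc inc e = (\<lambda>f. (sig u w (fst (inc f)), sig u w (snd (inc f))))"
  by (simp add: contract_inc_def sig_def)

lemma contract_V_eq: "inc e = (u, w) \<Longrightarrow> contract_V V inc e = sig u w ` V"
  by (simp add: contract_V_def sig_def)

lemma adj_mono: "F \<subseteq> G \<Longrightarrow> adj inc F \<subseteq> adj inc G"
  by (auto simp: adj_def)

lemma rt_mono: "F \<subseteq> G \<Longrightarrow> (adj inc F)\<^sup>* \<subseteq> (adj inc G)\<^sup>*"
  by (rule rtrancl_mono[OF adj_mono])

lemma rt_sym: "(x,y) \<in> (adj inc F)\<^sup>* \<Longrightarrow> (y,x) \<in> (adj inc F)\<^sup>*"
proof -
  have "sym (adj inc F)" by (auto simp: sym_def adj_def)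
  then have "sym ((adj inc F)\<^sup>*)" by (rule sym_rtrancl)
  then show "(x,y) \<in> (adj inc F)\<^sup>* \<Longrightarrow> (y,x) \<in> (adj inc F)\<^sup>*" by (auto dest: symD)
qed

lemma reach_fwd:
  assumes "inc e = (u, w)" "(x,y) \<in> (adj inc (insert e F))\<^sup>*"
  shows "(sig u w x, sig u w y) \<in> (adj (contract_inc inc e) F)\<^sup>*"
  using assms(2)
proof (induction rule: rtrancl_induct)
  case base then show ?case by simp
next
  case (step y z)
  from step.hyps(2) obtain g where g: "g \<in> insert e F" "inc g = (y,z) \<or> inc g = (z,y)"
    by (auto simp: adj_def)
  have "(sig u w y, sig u w z) \<in> (adj (contract_inc inc e) F)\<^sup>*"
  proof (cases "g = e")
    case True
    then have "sig u w y = sig u w z" using g assms(1) by (auto simp: sig_def)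
    then show ?thesis by simp
  next
    case False
    then have "g \<in> F" using g by simp
    then have "(sig u w y, sig u w z) \<in> adj (contract_inc inc e) F"
      using g unfolding adj_def contract_inc_eq[of inc e u w, OF assms(1)] by force
    then show ?thesis by simp
  qed
  with step.IH show ?case by (rule rtrancl_trans)
qed

lemma sig_reach:
  assumes "inc e = (u, w)"
  shows "(z, sig u w z) \<in> (adj inc (insert e F))\<^sup>*" "(sig u w z, z) \<in> (adj inc (insert e F))\<^sup>*"
proof -
  have "(w,u) \<in> adj inc (insert e F)" "(u,w) \<in> adj inc (insert e F)" using assms by (auto simp: adj_def)
  then show "(z, sig u w z) \<in> (adj inc (insert e F))\<^sup>*" "(sig u w z, z) \<in> (adj inc (insert e F))\<^sup>*"
    by (auto simp: sig_def)
qed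

lemma reach_bwd_aux:
  assumes "inc e = (u, w)" "(p,q) \<in> (adj (contract_inc inc e) F)\<^sup>*"
  shows "(p,q) \<in> (adj inc (insert e F))\<^sup>*"
  using assms(2)
proof (induction rule: rtrancl_induct)
  case base then show ?case by simp
next
  case (step q r)
  from step.hyps(2) obtain g where g: "g \<in> F" "contract_inc inc e g = (q,r) \<or> contract_inc inc e g = (r,q)"
    by (auto simp: adj_def)
  obtain a b where ab: "inc g = (a,b)" by (cases "inc g")
  have qr: "(q = sig u w a \<and> r = sig u w b) \<or> (q = sig u w b \<and> r = sig u w a)"
    using g ab by (auto simp: contract_inc_eq[of inc e u w, OF assms(1)])
  have "(a,b) \<in> adj inc (insert e F)" "(b,a) \<in> adj inc (insert e F)" using g(1) ab by (auto simp: adj_def)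
  then have 1: "(a,b) \<in> (adj inc (insert e F))\<^sup>*" "(b,a) \<in> (adj inc (insert e F))\<^sup>*" by auto
  have "(q,r) \<in> (adj inc (insert e F))\<^sup>*"
    using qr 1 sig_reach[of inc e u w _ F, OF assms(1)] by (meson rtrancl_trans)
  with step.IH show ?case by (rule rtrancl_trans)
qed

lemma reach_bwd:
  assumes "inc e = (u, w)" "(sig u w x, sig u w y) \<in> (adj (contract_inc inc e) F)\<^sup>*"
  shows "(x,y) \<in> (adj inc (insert e F))\<^sup>*"
  using reach_bwd_aux[of inc e u w, OF assms] sig_reach[of inc e u w _ F, OF assms(1)] by (meson rtrancl_trans)

lemma insert_reach:
  assumes "inc f = (a,b)" "(x,y) \<in> (adj inc (insert f F))\<^sup>*"
  shows "(x,y) \<in> (adj inc F)\<^sup>* \<or> ((x,a) \<in> (adj inc F)\<^sup>* \<and> (b,y) \<in> (adj inc F)\<^sup>*)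
     \<or> ((x,b) \<in> (adj inc F)\<^sup>* \<and> (a,y) \<in> (adj inc F)\<^sup>*)"
  using assms(2)
proof (induction rule: rtrancl_induct)
  case base then show ?case by simp
next
  case (step y z)
  let ?R = "(adj inc F)\<^sup>*"
  from step.hyps(2) obtain g where g: "g \<in> insert f F" "inc g = (y,z) \<or> inc g = (z,y)"
    by (auto simp: adj_def)
  show ?case
  proof (cases "g = f")
    case False
    then have "(y,z) \<in> adj inc F" using g by (auto simp: adj_def)
    then have "(y,z) \<in> ?R" by auto
    then show ?thesis using step.IH by (meson rtrancl_trans)
  next
    case True
    then have yz: "(y = a \<and> z = b) \<or> (y = b \<and> z = a)" using g assms(1) by auto
    from yz show ?thesis
    proof (elim disjE conjE)
      assume yz: "y = a" "z = b"
      from step.IH show ?thesis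
      proof (elim disjE conjE)
        assume "(x,y) \<in> ?R" then show ?thesis using yz by simp
      next
        assume "(x,a) \<in> ?R" "(b,y) \<in> ?R"
        then have "(x,b) \<in> ?R" using yz rt_sym[of b a inc F] rtrancl_trans[of x a ?R b] by simp
        then show ?thesis using yz by simp
      next
        assume "(x,b) \<in> ?R" "(a,y) \<in> ?R" then show ?thesis using yz by simp
      qed
    next
      assume yz: "y = b" "z = a"
      from step.IH show ?thesis
      proof (elim disjE conjE)
        assume "(x,y) \<in> ?R" then show ?thesis using yz by simp
      next
        assume "(x,a) \<in> ?R" "(b,y) \<in> ?R" then show ?thesis using yz by simp
      next
        assume "(x,b) \<in> ?R" "(a,y) \<in> ?R"
        then have "(x,a) \<in> ?R" using yz rt_sym[of a b inc F] rtrancl_trans[of x b ?R a] by simp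
        then show ?thesis using yz by simp
      qed
    qed
  qed
qed

lemma cyc:
  assumes "finite F" "inc e = (u,w)" "u \<noteq> w" "(u,w) \<in> (adj inc F)\<^sup>*"
  shows "\<exists>f\<in>F. contract_inc inc e f \<in> (adj (contract_inc inc e) (F - {f}))\<^sup>*"
  using assms(1,4)
proof (induction F rule: finite_induct)
  case empty then show ?case using assms(3) by (simp add: adj_def)
next
  case (insert f F0)
  show ?case
  proof (cases "(u,w) \<in> (adj inc F0)\<^sup>*")
    case True
    from insert.IH[OF True] obtain f' where f': "f' \<in> F0"
      "contract_inc inc e f' \<in> (adj (contract_inc inc e) (F0 - {f'}))\<^sup>*" by blast
    have "(adj (contract_inc inc e) (F0 - {f'}))\<^sup>* \<subseteq> (adj (contract_inc inc e) (insert f F0 - {f'}))\<^sup>*"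
      by (rule rt_mono) blast
    then show ?thesis using f' by blast
  next
    case False
    obtain a b where ab: "inc f = (a,b)" by (cases "inc f")
    let ?R = "(adj inc F0)\<^sup>*"
    let ?Re = "(adj inc (insert e F0))\<^sup>*"
    have c: "((u,a) \<in> ?R \<and> (b,w) \<in> ?R) \<or> ((u,b) \<in> ?R \<and> (a,w) \<in> ?R)"
      using insert_reach[OF ab insert.prems] False by blast
    have sub: "?R \<subseteq> ?Re" by (rule rt_mono) blast
    have "(u,w) \<in> adj inc (insert e F0)" "(w,u) \<in> adj inc (insert e F0)"
      using assms(2) by (auto simp: adj_def)
    then have uw: "(u,w) \<in> ?Re" "(w,u) \<in> ?Re" by auto
    have "(a,b) \<in> ?Re"
      using c
    proof (elim disjE conjE)
      assume "(u,a) \<in> ?R" "(b,w) \<in> ?R"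
      then have "(a,u) \<in> ?Re" "(w,b) \<in> ?Re" using sub rt_sym[of u a inc F0] rt_sym[of b w inc F0] by blast+
      then show ?thesis using uw rtrancl_trans[of a u "adj inc (insert e F0)" w] rtrancl_trans[of a w "adj inc (insert e F0)" b] by blast
    next
      assume "(u,b) \<in> ?R" "(a,w) \<in> ?R"
      then have "(a,w) \<in> ?Re" "(u,b) \<in> ?Re" using sub by blast+
      then show ?thesis using uw rtrancl_trans[of a w "adj inc (insert e F0)" u] rtrancl_trans[of a u "adj inc (insert e F0)" b] by blast
    qed
    then have "(sig u w a, sig u w b) \<in> (adj (contract_inc inc e) F0)\<^sup>*" by (rule reach_fwd[of inc e u w, OF assms(2)])
    moreover have "contract_inc inc e f = (sig u w a, sig u w b)"
      using ab by (simp add: contract_inc_eq[of inc e u w, OF assms(2)])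
    moreover have "insert f F0 - {f} = F0" using insert.hyps(2) by blast
    ultimately have "contract_inc inc e f \<in> (adj (contract_inc inc e) (insert f F0 - {f}))\<^sup>*"
      by simp
    then show ?thesis by blast
  qed
qed



lemma K1:
  assumes "spanning_tree V inc Es T" "e \<in> T"
  shows "spanning_tree (contract_V V inc e) (contract_inc inc e) (Es - {e}) (T - {e})"
proof -
  obtain u w where uw: "inc e = (u,w)" by (cases "inc e")
  have TE: "insert e (T - {e}) = T" using assms(2) by blast
  have sub: "T - {e} \<subseteq> Es - {e}" using assms(1) by (auto simp: spanning_tree_def)
  have conn: "connected_graph (contract_V V inc e) (contract_inc inc e) (T - {e})"
    unfolding connected_graph_def contract_V_eq[of inc e u w, OF uw]
  proof (intro conjI ballI)
    show "sig u w ` V \<noteq> {}" using assms(1) by (auto simp: spanning_tree_def connected_graph_def)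
  next
    fix x' y' assume "x' \<in> sig u w ` V" "y' \<in> sig u w ` V"
    then obtain x y where xy: "x \<in> V" "y \<in> V" "x' = sig u w x" "y' = sig u w y" by blast
    have "(x,y) \<in> (adj inc T)\<^sup>*" using assms(1) xy by (auto simp: spanning_tree_def connected_graph_def)
    then have "(x,y) \<in> (adj inc (insert e (T - {e})))\<^sup>*" using TE by simp
    then show "(x', y') \<in> (adj (contract_inc inc e) (T - {e}))\<^sup>*"
      using reach_fwd[of inc e u w, OF uw] xy by blast
  qed
  have acyc: "acyclic_edges (contract_inc inc e) (T - {e})"
    unfolding acyclic_edges_def
  proof
    fix f assume f: "f \<in> T - {e}"
    show "contract_inc inc e f \<notin> (adj (contract_inc inc e) (T - {e} - {f}))\<^sup>*"
    proof
      assume h: "contract_inc inc e f \<in> (adj (contract_inc inc e) (T - {e} - {f}))\<^sup>*"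
      obtain a b where ab: "inc f = (a,b)" by (cases "inc f")
      have "(sig u w a, sig u w b) \<in> (adj (contract_inc inc e) (T - {e} - {f}))\<^sup>*"
        using h ab by (simp add: contract_inc_eq[of inc e u w, OF uw])
      then have "(a,b) \<in> (adj inc (insert e (T - {e} - {f})))\<^sup>*"
        by (rule reach_bwd[of inc e u w, OF uw])
      moreover have "insert e (T - {e} - {f}) = T - {f}" using f assms(2) by blast
      ultimately show False using assms(1) f ab by (auto simp: spanning_tree_def acyclic_edges_def)
    qed
  qed
  show ?thesis using sub conn acyc by (simp add: spanning_tree_def)
qed

lemma K2:
  assumes "spanning_tree (contract_V V inc e) (contract_inc inc e) (Es - {e}) T'"
    "e \<in> Es" "\<not> is_loop inc Es e" "finite Es"
  shows "spanning_tree V inc Es (insert e T')"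
proof -
  obtain u w where uw: "inc e = (u,w)" by (cases "inc e")
  have neq: "u \<noteq> w" using assms(2,3) uw by (simp add: is_loop_def)
  have T': "T' \<subseteq> Es - {e}" using assms(1) by (simp add: spanning_tree_def)
  have fT': "finite T'" using T' assms(4) finite_subset by blast
  have sub: "insert e T' \<subseteq> Es" using T' assms(2) by blast
  have conn: "connected_graph V inc (insert e T')"
    unfolding connected_graph_def
  proof (intro conjI ballI)
    show "V \<noteq> {}" using assms(1) by (auto simp: spanning_tree_def connected_graph_def contract_V_eq[of inc e u w, OF uw])
  next
    fix x y assume xy: "x \<in> V" "y \<in> V"
    then have "(sig u w x, sig u w y) \<in> (adj (contract_inc inc e) T')\<^sup>*"
      using assms(1) by (auto simp: spanning_tree_def connected_graph_def contract_V_eq[of inc e u w, OF uw])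
    then show "(x, y) \<in> (adj inc (insert e T'))\<^sup>*" by (rule reach_bwd[of inc e u w, OF uw])
  qed
  have acT': "\<And>f. f \<in> T' \<Longrightarrow> contract_inc inc e f \<notin> (adj (contract_inc inc e) (T' - {f}))\<^sup>*"
    using assms(1) by (simp add: spanning_tree_def acyclic_edges_def)
  have acyc: "acyclic_edges inc (insert e T')"
    unfolding acyclic_edges_def
  proof
    fix f assume f: "f \<in> insert e T'"
    show "inc f \<notin> (adj inc (insert e T' - {f}))\<^sup>*"
    proof (cases "f = e")
      case True
      have eq: "insert e T' - {f} = T'" using True T' by blast
      show ?thesis
      proof
        assume "inc f \<in> (adj inc (insert e T' - {f}))\<^sup>*"
        then have "(u,w) \<in> (adj inc T')\<^sup>*" using eq True uw by simp
        then obtain g where "g \<in> T'" "contract_inc inc e g \<in> (adj (contract_inc inc e) (T' - {g}))\<^sup>*"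
          using cyc[of T' inc e u w, OF fT' uw neq] by blast
        then show False using acT' by blast
      qed
    next
      case False
      then have fT: "f \<in> T'" using f by simp
      obtain a b where ab: "inc f = (a,b)" by (cases "inc f")
      have eq: "insert e T' - {f} = insert e (T' - {f})" using False by blast
      show ?thesis
      proof
        assume "inc f \<in> (adj inc (insert e T' - {f}))\<^sup>*"
        then have "(a,b) \<in> (adj inc (insert e (T' - {f})))\<^sup>*" using eq ab by simp
        then have "(sig u w a, sig u w b) \<in> (adj (contract_inc inc e) (T' - {f}))\<^sup>*"
          by (rule reach_fwd[of inc e u w, OF uw])
        then have "contract_inc inc e f \<in> (adj (contract_inc inc e) (T' - {f}))\<^sup>*"
          using ab by (simp add: contract_inc_eq[of inc e u w, OF uw])
        then show False using acT' fT by blast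
      qed
    qed
  qed
  show ?thesis using sub conn acyc by (simp add: spanning_tree_def)
qed

lemma conn_components: "connected_graph V inc F \<Longrightarrow> components V inc F = {V}"
  unfolding connected_graph_def components_def by blast

lemma conn_mono: "connected_graph V inc F \<Longrightarrow> F \<subseteq> G \<Longrightarrow> connected_graph V inc G"
  unfolding connected_graph_def using rt_mono by blast

lemma tree_not_isthmus: "spanning_tree V inc Es T \<Longrightarrow> e \<notin> T \<Longrightarrow> \<not> is_isthmus V inc Es e"
proof -
  assume T: "spanning_tree V inc Es T" and e: "e \<notin> T"
  then have "T \<subseteq> Es - {e}" "connected_graph V inc T" by (auto simp: spanning_tree_def)
  then have "connected_graph V inc (Es - {e})" "connected_graph V inc Es" using conn_mono by blast+
  then show ?thesis by (simp add: is_isthmus_def conn_components)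
qed

lemma comp_image: "components V inc F = (\<lambda>x. (adj inc F)\<^sup>* `` {x} \<inter> V) ` V"
  unfolding components_def by auto

lemma not_isthmus_conn:
  assumes "finite V" "connected_graph V inc Es" "e \<in> Es" "\<not> is_isthmus V inc Es e"
  shows "connected_graph V inc (Es - {e})"
proof -
  let ?R = "(adj inc (Es - {e}))\<^sup>*"
  let ?C = "components V inc (Es - {e})"
  have V: "V \<noteq> {}" using assms(2) by (simp add: connected_graph_def)
  have "card ?C \<le> 1" using assms by (simp add: is_isthmus_def conn_components)
  moreover have "finite ?C" using assms(1) unfolding comp_image by simp
  moreover have "?C \<noteq> {}" using V unfolding comp_image by simp
  ultimately have "card ?C = 1" by (simp add: Suc_leI antisym card_gt_0_iff)
  then obtain C where C: "?C = {C}" by (rule card_1_singletonE)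
  show ?thesis unfolding connected_graph_def
  proof (intro conjI ballI)
    show "V \<noteq> {}" by (rule V)
  next
    fix x y assume xy: "x \<in> V" "y \<in> V"
    have "?R `` {x} \<inter> V \<in> ?C" "?R `` {y} \<inter> V \<in> ?C"
      using xy unfolding comp_image by simp_all
    then have "?R `` {x} \<inter> V = ?R `` {y} \<inter> V" using C by simp
    moreover have "y \<in> ?R `` {y} \<inter> V" using xy by simp
    ultimately have "y \<in> ?R `` {x}" by blast
    then show "(x, y) \<in> ?R" by simp
  qed
qed

lemma loop_conn:
  assumes "connected_graph V inc Es" "is_loop inc Es e"
  shows "connected_graph V inc (Es - {e})"
proof -
  have "adj inc Es \<subseteq> (adj inc (Es - {e}))\<^sup>*"
  proof
    fix p assume "p \<in> adj inc Es"
    then obtain x y g where p: "p = (x,y)" "g \<in> Es" "inc g = (x,y) \<or> inc g = (y,x)"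
      unfolding adj_def by blast
    show "p \<in> (adj inc (Es - {e}))\<^sup>*"
    proof (cases "g = e")
      case True
      then have "x = y" using p assms(2) by (auto simp: is_loop_def)
      then show ?thesis using p by simp
    next
      case False
      then have "p \<in> adj inc (Es - {e})" using p unfolding adj_def by blast
      then show ?thesis by blast
    qed
  qed
  then have "(adj inc Es)\<^sup>* \<subseteq> (adj inc (Es - {e}))\<^sup>*" by (rule rtrancl_subset_rtrancl)
  then show ?thesis using assms(1) unfolding connected_graph_def by blast
qed

lemma contract_conn:
  assumes "connected_graph V inc Es" "e \<in> Es"
  shows "connected_graph (contract_V V inc e) (contract_inc inc e) (Es - {e})"
proof -
  obtain u w where uw: "inc e = (u,w)" by (cases "inc e")
  have E: "insert e (Es - {e}) = Es" using assms(2) by blast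
  show ?thesis
    unfolding connected_graph_def contract_V_eq[of inc e u w, OF uw]
  proof (intro conjI ballI)
    show "sig u w ` V \<noteq> {}" using assms(1) by (auto simp: connected_graph_def)
  next
    fix x' y' assume "x' \<in> sig u w ` V" "y' \<in> sig u w ` V"
    then obtain x y where xy: "x \<in> V" "y \<in> V" "x' = sig u w x" "y' = sig u w y" by blast
    have "(x,y) \<in> (adj inc Es)\<^sup>*" using assms(1) xy by (auto simp: connected_graph_def)
    then have "(x,y) \<in> (adj inc (insert e (Es - {e})))\<^sup>*" using E by simp
    then show "(x', y') \<in> (adj (contract_inc inc e) (Es - {e}))\<^sup>*"
      using reach_fwd[of inc e u w, OF uw] xy by blast
  qed
qed

lemma tree_sub: "spanning_tree V inc Es T \<Longrightarrow> T \<subseteq> Es' \<Longrightarrow> spanning_tree V inc Es' T"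
  by (simp add: spanning_tree_def)

lemma loop_notin_tree: "spanning_tree V inc Es T \<Longrightarrow> is_loop inc Es e \<Longrightarrow> e \<notin> T"
  unfolding spanning_tree_def acyclic_edges_def is_loop_def
  by (metis prod.collapse rtrancl.rtrancl_refl)

lemma finite_contract_V: "finite V \<Longrightarrow> finite (contract_V V inc e)"
  by (simp add: contract_V_def split: prod.split)



definition dtinv :: "'e set \<Rightarrow> (bool list \<Rightarrow> 'e) \<Rightarrow> bool list \<Rightarrow> bool" where
  "dtinv Es lab p \<longleftrightarrow> (\<forall>q. length q = card Es - 1 \<longrightarrow>
      distinct (map (\<lambda>k. lab (p @ take k q)) [0..<card Es]) \<and>
      set (map (\<lambda>k. lab (p @ take k q)) [0..<card Es]) = Es)"

lemma dtinv_init: "decision_tree E lab \<Longrightarrow> dtinv E lab []"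
  by (simp add: decision_tree_def dtinv_def)

lemma dtinv_head: assumes "dtinv Es lab p" "finite Es" "Es \<noteq> {}" shows "lab p \<in> Es"
proof -
  let ?q = "replicate (card Es - 1) False"
  let ?f = "\<lambda>k. lab (p @ take k ?q)"
  have c: "card Es > 0" using assms by auto
  have l: "length ?q = card Es - 1" by simp
  have "set (map ?f [0..<card Es]) = Es" using assms(1) l unfolding dtinv_def by blast
  then have E: "?f ` set [0..<card Es] = Es" by (simp only: set_map)
  have "?f 0 \<in> ?f ` set [0..<card Es]" using c by (intro imageI) simp
  then have "?f 0 \<in> Es" using E by simp
  then show ?thesis by simp
qed

lemma dist_aux: "distinct (x # xs) \<Longrightarrow> set (x # xs) = E \<Longrightarrow> distinct xs \<and> set xs = E - {x}"
  by auto

lemma dtinv_step: assumes "dtinv Es lab p" "finite Es" "Es \<noteq> {}" shows "dtinv (Es - {lab p}) lab (p @ [b])"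
proof (cases "card Es = 1")
  case True
  obtain x where x: "Es = {x}" using True card_1_singletonE by blast
  have emp: "Es - {lab p} = {}" using dtinv_head[OF assms] x by simp
  show ?thesis unfolding dtinv_def emp by simp
next
  case False
  have "card Es > 0" using assms by auto
  with False have m: "card Es = Suc (Suc (card Es - 2))" by arith
  define m where "m = card Es - 2"
  have m: "card Es = Suc (Suc m)" using m m_def by simp
  have c: "card (Es - {lab p}) = Suc m" using dtinv_head[OF assms] m assms(2) by simp
  show ?thesis unfolding dtinv_def c
  proof (intro allI impI)
    fix q' :: "bool list" assume l: "length q' = Suc m - 1"
    let ?q = "b # q'"
    have "length ?q = card Es - 1" using l m by simp
    then have H: "distinct (map (\<lambda>k. lab (p @ take k ?q)) [0..<card Es]) \<and>
        set (map (\<lambda>k. lab (p @ take k ?q)) [0..<card Es]) = Es" using assms(1) unfolding dtinv_def by blast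
    have eq: "map (\<lambda>k. lab (p @ take k ?q)) [0..<card Es] = lab p # map (\<lambda>k. lab ((p @ [b]) @ take k q')) [0..<Suc m]"
      unfolding m map_upt_Suc by simp
    let ?xs = "map (\<lambda>k. lab ((p @ [b]) @ take k q')) [0..<Suc m]"
    have "distinct (lab p # ?xs)" "set (lab p # ?xs) = Es" using H unfolding eq by simp_all
    then show "distinct ?xs \<and> set ?xs = Es - {lab p}" by (rule dist_aux)
  qed
qed

lemma run_shape: fixes V :: "'v set" shows "\<exists>t (V' :: 'v set) inc' b. run (Suc n) V inc Es lab S p = (lab p, t) # run n V' inc' (Es - {lab p}) lab S (p @ [b])"
proof -
  let ?e = "lab p"
  show ?thesis
  proof (cases "is_loop inc Es ?e")
    case True then show ?thesis
      by (simp add: Let_def) blast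
  next
    case nl: False
    show ?thesis
    proof (cases "is_isthmus V inc Es ?e")
      case True then show ?thesis using nl
        by (simp add: Let_def) blast
    next
      case ni: False
      show ?thesis
      proof (cases "?e \<in> S")
        case True then show ?thesis using nl ni
          by (simp add: Let_def) blast
      next
        case False then show ?thesis using nl ni
          by (simp add: Let_def) blast
      qed
    qed
  qed
qed

lemma cons_aux: "e \<in> Es \<Longrightarrow> set xs = Es - {e} \<and> distinct xs \<Longrightarrow> set (e # xs) = Es \<and> distinct (e # xs)"
  by auto

lemma run_edges:
  fixes V :: "'v set"
  shows "n = card Es \<Longrightarrow> finite Es \<Longrightarrow> dtinv Es lab p \<Longrightarrow>
   set (map fst (run n V inc Es lab S p)) = Es \<and> distinct (map fst (run n V inc Es lab S p))"
proof (induction n arbitrary: V inc Es p)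
  case 0 then show ?case by simp
next
  case (Suc n)
  hence ne: "Es \<noteq> {}" by auto
  have e: "lab p \<in> Es" using dtinv_head[OF Suc.prems(3) Suc.prems(2) ne] .
  have c: "n = card (Es - {lab p})" using Suc.prems e by simp
  have f: "finite (Es - {lab p})" using Suc.prems by simp
  have IH: "set (map fst (run n V' inc' (Es - {lab p}) lab S (p @ [b]))) = Es - {lab p} \<and>
      distinct (map fst (run n V' inc' (Es - {lab p}) lab S (p @ [b])))" for V' :: "'v set" and inc' b
    using Suc.IH[OF c f dtinv_step[OF Suc.prems(3,2) ne, of b]] .
  obtain t and V' :: "'v set" and inc' b where r: "run (Suc n) V inc Es lab S p = (lab p, t) # run n V' inc' (Es - {lab p}) lab S (p @ [b])"
    using run_shape by blast
  show ?case unfolding r list.map(2) fst_conv by (rule cons_aux[OF e IH])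
qed

lemma run_S:
  "(e, TSe) \<in> set (run n V inc Es lab S p) \<Longrightarrow> e \<notin> S"
  "(e, TSi) \<in> set (run n V inc Es lab S p) \<Longrightarrow> e \<in> S"
  by (induction n arbitrary: V inc Es p) (auto simp: Let_def split: if_splits)



lemma run_L: "is_loop inc Es (lab p) \<Longrightarrow>
  run (Suc n) V inc Es lab S p = (lab p, TL) # run n V inc (Es - {lab p}) lab S (p @ [False])"
  by (simp add: Let_def)
lemma run_I: "\<not> is_loop inc Es (lab p) \<Longrightarrow> is_isthmus V inc Es (lab p) \<Longrightarrow>
  run (Suc n) V inc Es lab S p = (lab p, TI) # run n (contract_V V inc (lab p)) (contract_inc inc (lab p)) (Es - {lab p}) lab S (p @ [True])"
  by (simp add: Let_def)
lemma run_Si: "\<not> is_loop inc Es (lab p) \<Longrightarrow> \<not> is_isthmus V inc Es (lab p) \<Longrightarrow> lab p \<in> S \<Longrightarrow>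
  run (Suc n) V inc Es lab S p = (lab p, TSi) # run n (contract_V V inc (lab p)) (contract_inc inc (lab p)) (Es - {lab p}) lab S (p @ [True])"
  by (simp add: Let_def)
lemma run_Se: "\<not> is_loop inc Es (lab p) \<Longrightarrow> \<not> is_isthmus V inc Es (lab p) \<Longrightarrow> lab p \<notin> S \<Longrightarrow>
  run (Suc n) V inc Es lab S p = (lab p, TSe) # run n V inc (Es - {lab p}) lab S (p @ [False])"
  by (simp add: Let_def)

lemma tail_aux: "\<forall>e. ((e,TSe) \<in> set (x # r) \<or> (e,TSi) \<in> set (x # r)) \<longrightarrow> P e \<Longrightarrow>
   \<forall>e. ((e,TSe) \<in> set r \<or> (e,TSi) \<in> set r) \<longrightarrow> P e"
  by auto

lemma run_cong:
  "(\<forall>e. ((e,TSe) \<in> set (run n V inc Es lab S p) \<or> (e,TSi) \<in> set (run n V inc Es lab S p)) \<longrightarrow> (e \<in> S \<longleftrightarrow> e \<in> S'))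
   \<Longrightarrow> run n V inc Es lab S p = run n V inc Es lab S' p"
proof (induction n arbitrary: V inc Es p)
  case 0 then show ?case by simp
next
  case (Suc n)
  show ?case
  proof (cases "is_loop inc Es (lab p)")
    case True
    note eq = run_L[where inc=inc and Es=Es and lab=lab and p=p and n=n and V=V and S=S, OF True] run_L[where inc=inc and Es=Es and lab=lab and p=p and n=n and V=V and S=S', OF True]
    have "run n V inc (Es - {lab p}) lab S (p @ [False]) = run n V inc (Es - {lab p}) lab S' (p @ [False])"
      using tail_aux[OF Suc.prems[unfolded eq(1)]] by (rule Suc.IH)
    then show ?thesis unfolding eq by simp
  next
    case nl: False
    show ?thesis
    proof (cases "is_isthmus V inc Es (lab p)")
      case True
      note eq = run_I[where inc=inc and Es=Es and lab=lab and p=p and n=n and V=V and S=S, OF nl True] run_I[where inc=inc and Es=Es and lab=lab and p=p and n=n and V=V and S=S', OF nl True]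
      have "run n (contract_V V inc (lab p)) (contract_inc inc (lab p)) (Es - {lab p}) lab S (p @ [True]) =
            run n (contract_V V inc (lab p)) (contract_inc inc (lab p)) (Es - {lab p}) lab S' (p @ [True])"
        using tail_aux[OF Suc.prems[unfolded eq(1)]] by (rule Suc.IH)
      then show ?thesis unfolding eq by simp
    next
      case ni: False
      show ?thesis
      proof (cases "lab p \<in> S")
        case True
        note eq1 = run_Si[where inc=inc and Es=Es and lab=lab and p=p and n=n and V=V and S=S, OF nl ni True]
        have "lab p \<in> S'" using Suc.prems True unfolding eq1 by simp
        note eq = eq1 run_Si[where inc=inc and Es=Es and lab=lab and p=p and n=n and V=V and S=S', OF nl ni this]
        have "run n (contract_V V inc (lab p)) (contract_inc inc (lab p)) (Es - {lab p}) lab S (p @ [True]) =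
            run n (contract_V V inc (lab p)) (contract_inc inc (lab p)) (Es - {lab p}) lab S' (p @ [True])"
          using tail_aux[OF Suc.prems[unfolded eq(1)]] by (rule Suc.IH)
        then show ?thesis unfolding eq by simp
      next
        case False
        note eq1 = run_Se[where inc=inc and Es=Es and lab=lab and p=p and n=n and V=V and S=S, OF nl ni False]
        have "lab p \<notin> S'" using Suc.prems False unfolding eq1 by simp
        note eq = eq1 run_Se[where inc=inc and Es=Es and lab=lab and p=p and n=n and V=V and S=S', OF nl ni this]
        have "run n V inc (Es - {lab p}) lab S (p @ [False]) = run n V inc (Es - {lab p}) lab S' (p @ [False])"
          using tail_aux[OF Suc.prems[unfolded eq(1)]] by (rule Suc.IH)
        then show ?thesis unfolding eq by simp
      qed
    qed
  qed
qed

definition ctr :: "('e \<times> etype) list \<Rightarrow> 'e set" where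
  "ctr r = {e. (e,TI) \<in> set r \<or> (e,TSi) \<in> set r}"

lemma ctr_simps[simp]: "ctr [] = {}" "ctr ((e,TL) # r) = ctr r" "ctr ((e,TSe) # r) = ctr r"
  "ctr ((e,TI) # r) = insert e (ctr r)" "ctr ((e,TSi) # r) = insert e (ctr r)"
  by (auto simp: ctr_def)




lemma tree_del: "spanning_tree V inc (Es - {e}) T \<Longrightarrow> spanning_tree V inc Es T"
  by (auto simp: spanning_tree_def)

lemma run_tree:
  fixes V :: "'v set"
  shows "n = card Es \<Longrightarrow> finite Es \<Longrightarrow> finite V \<Longrightarrow> dtinv Es lab p \<Longrightarrow> connected_graph V inc Es \<Longrightarrow>
    spanning_tree V inc Es (ctr (run n V inc Es lab S p))"
proof (induction n arbitrary: V inc Es p)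
  case 0
  then have "Es = {}" by simp
  then show ?case using 0 by (simp add: spanning_tree_def acyclic_edges_def)
next
  case (Suc n)
  hence ne: "Es \<noteq> {}" by auto
  let ?e = "lab p"
  have e: "?e \<in> Es" using dtinv_head[OF Suc.prems(4) Suc.prems(2) ne] .
  have c: "n = card (Es - {?e})" using Suc.prems e by simp
  have f: "finite (Es - {?e})" using Suc.prems by simp
  have dt: "dtinv (Es - {?e}) lab (p @ [b])" for b using dtinv_step[OF Suc.prems(4,2) ne] .
  have W: "\<And>n V S. run (Suc n) V inc Es lab S p = run (Suc n) V inc Es lab S p" by simp
  show ?case
  proof (cases "is_loop inc Es ?e")
    case True
    note eq = run_L[where inc=inc and Es=Es and lab=lab and p=p and n=n and V=V and S=S, OF True]
    have "spanning_tree V inc (Es - {?e}) (ctr (run n V inc (Es - {?e}) lab S (p @ [False])))"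
      using Suc.IH[OF c f Suc.prems(3) dt loop_conn[OF Suc.prems(5) True]] .
    then show ?thesis unfolding eq ctr_simps by (rule tree_del)
  next
    case nl: False
    have contr: "spanning_tree V inc Es (insert ?e (ctr (run n (contract_V V inc ?e) (contract_inc inc ?e) (Es - {?e}) lab S (p @ [True]))))"
    proof -
      have "spanning_tree (contract_V V inc ?e) (contract_inc inc ?e) (Es - {?e})
           (ctr (run n (contract_V V inc ?e) (contract_inc inc ?e) (Es - {?e}) lab S (p @ [True])))"
        using Suc.IH[OF c f finite_contract_V[OF Suc.prems(3)] dt contract_conn[OF Suc.prems(5) e]] .
      then show ?thesis by (rule K2[OF _ e nl Suc.prems(2)])
    qed
    show ?thesis
    proof (cases "is_isthmus V inc Es ?e")
      case True
      note eq = run_I[where inc=inc and Es=Es and lab=lab and p=p and n=n and V=V and S=S, OF nl True]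
      show ?thesis unfolding eq ctr_simps by (rule contr)
    next
      case ni: False
      show ?thesis
      proof (cases "?e \<in> S")
        case True
        note eq = run_Si[where inc=inc and Es=Es and lab=lab and p=p and n=n and V=V and S=S, OF nl ni True]
        show ?thesis unfolding eq ctr_simps by (rule contr)
      next
        case False
        note eq = run_Se[where inc=inc and Es=Es and lab=lab and p=p and n=n and V=V and S=S, OF nl ni False]
        have "spanning_tree V inc (Es - {?e}) (ctr (run n V inc (Es - {?e}) lab S (p @ [False])))"
          using Suc.IH[OF c f Suc.prems(3) dt not_isthmus_conn[OF Suc.prems(3,5) e ni]] .
        then show ?thesis unfolding eq ctr_simps by (rule tree_del)
      qed
    qed
  qed
qed

lemma run_tree_id:
  fixes V :: "'v set"
  shows "n = card Es \<Longrightarrow> finite Es \<Longrightarrow> dtinv Es lab p \<Longrightarrow> spanning_tree V inc Es (S \<inter> Es) \<Longrightarrow>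
    ctr (run n V inc Es lab S p) = S \<inter> Es"
proof (induction n arbitrary: V inc Es p)
  case 0
  then have "Es = {}" by simp
  then show ?case by simp
next
  case (Suc n)
  hence ne: "Es \<noteq> {}" by auto
  let ?e = "lab p"
  have e: "?e \<in> Es" using dtinv_head[OF Suc.prems(3) Suc.prems(2) ne] .
  have c: "n = card (Es - {?e})" using Suc.prems e by simp
  have f: "finite (Es - {?e})" using Suc.prems by simp
  have dt: "dtinv (Es - {?e}) lab (p @ [b])" for b using dtinv_step[OF Suc.prems(3,2) ne] .
  have T: "spanning_tree V inc Es (S \<inter> Es)" by (rule Suc.prems(4))
  have contr: "ctr (run n (contract_V V inc ?e) (contract_inc inc ?e) (Es - {?e}) lab S (p @ [True])) = S \<inter> (Es - {?e})"
    if eS: "?e \<in> S"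
  proof -
    have "spanning_tree (contract_V V inc ?e) (contract_inc inc ?e) (Es - {?e}) (S \<inter> Es - {?e})"
      using K1[OF T] eS e by blast
    moreover have "S \<inter> Es - {?e} = S \<inter> (Es - {?e})" by blast
    ultimately show ?thesis using Suc.IH[OF c f dt] by simp
  qed
  have del: "ctr (run n V inc (Es - {?e}) lab S (p @ [False])) = S \<inter> Es"
    if eS: "?e \<notin> S \<inter> Es"
  proof -
    have eq: "S \<inter> (Es - {?e}) = S \<inter> Es" using eS by blast
    have "spanning_tree V inc (Es - {?e}) (S \<inter> (Es - {?e}))" unfolding eq using T by (rule tree_sub) (use eS in blast)
    then show ?thesis using Suc.IH[OF c f dt] eq by simp
  qed
  show ?case
  proof (cases "is_loop inc Es ?e")
    case True
    note eq = run_L[where inc=inc and Es=Es and lab=lab and p=p and n=n and V=V and S=S, OF True]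
    have "?e \<notin> S \<inter> Es" using loop_notin_tree[OF T True] .
    then show ?thesis unfolding eq ctr_simps by (rule del)
  next
    case nl: False
    show ?thesis
    proof (cases "is_isthmus V inc Es ?e")
      case True
      note eq = run_I[where inc=inc and Es=Es and lab=lab and p=p and n=n and V=V and S=S, OF nl True]
      have "?e \<in> S" using tree_not_isthmus[OF T] True e by blast
      then show ?thesis unfolding eq ctr_simps using contr e by blast
    next
      case ni: False
      show ?thesis
      proof (cases "?e \<in> S")
        case True
        note eq = run_Si[where inc=inc and Es=Es and lab=lab and p=p and n=n and V=V and S=S, OF nl ni True]
        show ?thesis unfolding eq ctr_simps using contr[OF True] e True by blast
      next
        case False
        note eq = run_Se[where inc=inc and Es=Es and lab=lab and p=p and n=n and V=V and S=S, OF nl ni False]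
        show ?thesis unfolding eq ctr_simps using False by (intro del) blast
      qed
    qed
  qed
qed



theorem theorem13p3p1:
  fixes V :: "'v set" and E :: "'e set" and inc :: "'e \<Rightarrow> 'v \<times> 'v" and lab :: "bool list \<Rightarrow> 'e"
  assumes "is_graph V inc E" and "connected_graph V inc E" and "E \<noteq> {}"
    and "decision_tree E lab"
  shows "Pow E = (\<Union>T\<in>{T. spanning_tree V inc E T}.
            interval (T - internally_active V inc E lab T) (T \<union> externally_active V inc E lab T))
    \<and> (\<forall>T1 T2. spanning_tree V inc E T1 \<longrightarrow> spanning_tree V inc E T2 \<longrightarrow> T1 \<noteq> T2 \<longrightarrow>
           interval (T1 - internally_active V inc E lab T1) (T1 \<union> externally_active V inc E lab T1)
         \<inter> interval (T2 - internally_active V inc E lab T2) (T2 \<union> externally_active V inc E lab T2) = {})"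
proof -
  have fE: "finite E" and fV: "finite V" using assms(1) by (auto simp: is_graph_def)
  have dt: "dtinv E lab []" using assms(4) by (rule dtinv_init)
  define r where "r S = run (card E) V inc E lab S []" for S
  have act: "active V inc E lab S = {e. (e,TL) \<in> set (r S) \<or> (e,TI) \<in> set (r S)}" for S
    by (simp add: active_def r_def)
  have RE: "set (map fst (r S)) = E \<and> distinct (map fst (r S))" for S
    unfolding r_def by (rule run_edges[OF refl fE dt])
  have U: "t1 = t2" if "(e,t1) \<in> set (r S)" "(e,t2) \<in> set (r S)" for e t1 t2 S
    using eq_key_imp_eq_value[OF conjunct2[OF RE] that] .
  have mem: "\<exists>t. (e,t) \<in> set (r S)" if "e \<in> E" for e S
  proof -
    have "e \<in> fst ` set (r S)" using RE[of S] that by simp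
    then show ?thesis by force
  qed
  have TSe: "e \<notin> S" if "(e,TSe) \<in> set (r S)" for e S using that unfolding r_def by (rule run_S(1))
  have TSi: "e \<in> S" if "(e,TSi) \<in> set (r S)" for e S using that unfolding r_def by (rule run_S(2))
  have A: "spanning_tree V inc E (ctr (r S))" for S
    unfolding r_def by (rule run_tree[OF refl fE fV dt assms(2)])
  have B: "ctr (r T) = T" if "spanning_tree V inc E T" for T
  proof -
    have "T \<subseteq> E" using that by (simp add: spanning_tree_def)
    then have TE: "T \<inter> E = T" by blast
    show ?thesis unfolding r_def using run_tree_id[OF refl fE dt, of V inc T] that TE by simp
  qed
  have C: "r S = r S'" if "\<forall>e. ((e,TSe) \<in> set (r S) \<or> (e,TSi) \<in> set (r S)) \<longrightarrow> (e \<in> S \<longleftrightarrow> e \<in> S')" for S S'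
    using that unfolding r_def by (rule run_cong)
  have actE: "active V inc E lab S \<subseteq> E" for S
  proof
    fix e assume "e \<in> active V inc E lab S"
    then have "e \<in> fst ` set (r S)" unfolding act by force
    then show "e \<in> E" using RE[of S] by simp
  qed
  define Iv where "Iv T = interval (T - internally_active V inc E lab T) (T \<union> externally_active V inc E lab T)" for T
  have Iv_iff: "S \<in> Iv T \<longleftrightarrow> T - (active V inc E lab T \<inter> T) \<subseteq> S \<and> S \<subseteq> T \<union> (active V inc E lab T - T)" for S T
    by (simp add: Iv_def interval_def internally_active_def externally_active_def)
  have I: "r S = r T" if T: "spanning_tree V inc E T" and S: "S \<in> Iv T" for S T
  proof -
    have s1: "T - (active V inc E lab T \<inter> T) \<subseteq> S" and s2: "S \<subseteq> T \<union> (active V inc E lab T - T)"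
      using S Iv_iff by blast+
    have "r T = r S"
    proof (rule C, intro allI impI)
      fix e assume h: "(e,TSe) \<in> set (r T) \<or> (e,TSi) \<in> set (r T)"
      have na: "e \<notin> active V inc E lab T"
      proof
        assume "e \<in> active V inc E lab T"
        then have "(e,TL) \<in> set (r T) \<or> (e,TI) \<in> set (r T)" unfolding act by simp
        then show False using h U by (metis etype.distinct)
      qed
      from h show "e \<in> T \<longleftrightarrow> e \<in> S"
      proof
        assume "(e,TSe) \<in> set (r T)"
        then have "e \<notin> T" by (rule TSe)
        then show ?thesis using na s2 by blast
      next
        assume "(e,TSi) \<in> set (r T)"
        then have "e \<in> T" by (rule TSi)
        then show ?thesis using na s1 by blast
      qed
    qed
    then show ?thesis by simp
  qed
  have part1: "Pow E = (\<Union>T\<in>{T. spanning_tree V inc E T}. Iv T)"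
  proof
    show "Pow E \<subseteq> (\<Union>T\<in>{T. spanning_tree V inc E T}. Iv T)"
    proof
      fix S assume SE: "S \<in> Pow E"
      let ?T = "ctr (r S)"
      have eqr: "r S = r ?T"
      proof (rule C, intro allI impI)
        fix e assume h: "(e,TSe) \<in> set (r S) \<or> (e,TSi) \<in> set (r S)"
        from h show "e \<in> S \<longleftrightarrow> e \<in> ?T"
        proof
          assume a: "(e,TSe) \<in> set (r S)"
          have "e \<notin> ?T"
          proof
            assume "e \<in> ?T"
            then have "(e,TI) \<in> set (r S) \<or> (e,TSi) \<in> set (r S)" by (simp add: ctr_def)
            then show False using a U by (metis etype.distinct)
          qed
          then show ?thesis using TSe[OF a] by blast
        next
          assume a: "(e,TSi) \<in> set (r S)"
          then have "e \<in> ?T" by (simp add: ctr_def)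
          then show ?thesis using TSi[OF a] by blast
        qed
      qed
      have actEq: "active V inc E lab ?T = active V inc E lab S" unfolding act by (simp only: eqr[symmetric])
      have "S \<in> Iv ?T" unfolding Iv_iff actEq
      proof
        show "?T - (active V inc E lab S \<inter> ?T) \<subseteq> S"
        proof
          fix e assume "e \<in> ?T - (active V inc E lab S \<inter> ?T)"
          then have "(e,TI) \<in> set (r S) \<or> (e,TSi) \<in> set (r S)" "(e,TI) \<notin> set (r S)"
            unfolding act by (auto simp: ctr_def)
          then show "e \<in> S" using TSi by blast
        qed
      next
        show "S \<subseteq> ?T \<union> (active V inc E lab S - ?T)"
        proof
          fix e assume eS: "e \<in> S"
          show "e \<in> ?T \<union> (active V inc E lab S - ?T)"
          proof (cases "e \<in> ?T")
            case True then show ?thesis by blast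
          next
            case False
            then have n1: "(e,TI) \<notin> set (r S)" "(e,TSi) \<notin> set (r S)" by (auto simp: ctr_def)
            have n2: "(e,TSe) \<notin> set (r S)" using TSe eS by blast
            obtain t where t: "(e,t) \<in> set (r S)" using mem[of e S] eS SE by blast
            have "t = TL" using t n1 n2 by (cases t) auto
            then have "e \<in> active V inc E lab S" unfolding act using t by simp
            then show ?thesis using False by blast
          qed
        qed
      qed
      then show "S \<in> (\<Union>T\<in>{T. spanning_tree V inc E T}. Iv T)" using A[of S] by blast
    qed
  next
    show "(\<Union>T\<in>{T. spanning_tree V inc E T}. Iv T) \<subseteq> Pow E"
    proof
      fix S assume "S \<in> (\<Union>T\<in>{T. spanning_tree V inc E T}. Iv T)"
      then obtain T where T: "spanning_tree V inc E T" "S \<in> Iv T" by blast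
      have "T \<subseteq> E" using T(1) by (simp add: spanning_tree_def)
      then show "S \<in> Pow E" using T(2) actE[of T] unfolding Iv_iff by blast
    qed
  qed
  have part2: "Iv T1 \<inter> Iv T2 = {}" if "spanning_tree V inc E T1" "spanning_tree V inc E T2" "T1 \<noteq> T2" for T1 T2
  proof (rule ccontr)
    assume "Iv T1 \<inter> Iv T2 \<noteq> {}"
    then obtain S where "S \<in> Iv T1" "S \<in> Iv T2" by blast
    then have "r S = r T1" "r S = r T2" using I that by blast+
    then have "T1 = T2" using B[OF that(1)] B[OF that(2)] by simp
    then show False using that(3) by simp
  qed
  show ?thesis
  proof (intro conjI allI impI)
    show "Pow E = (\<Union>T\<in>{T. spanning_tree V inc E T}.
            interval (T - internally_active V inc E lab T) (T \<union> externally_active V inc E lab T))"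
      using part1 unfolding Iv_def .
  next
    fix T1 T2 assume "spanning_tree V inc E T1" "spanning_tree V inc E T2" "T1 \<noteq> T2"
    from part2[OF this] show "interval (T1 - internally_active V inc E lab T1) (T1 \<union> externally_active V inc E lab T1)
         \<inter> interval (T2 - internally_active V inc E lab T2) (T2 \<union> externally_active V inc E lab T2) = {}"
      unfolding Iv_def .
  qed
qed


end
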